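(* Under the hypotheses of Theorem 1 with $R(\delta\theta)=\|\delta\theta\|_1$ on $\mathbb{R}^{p^2}$, there is a constant $\eta_2>0$ such that with high probability $$\|\nabla\mathcal{L}(\delta\theta^*;\mathfrak{X}_1^{n_1},\mathfrak{X}_2^{n_2})\|_\infty\le\frac{\eta_2\sqrt{\log p}}{\sqrt{\min(n_1,n_2)}}.$$
   Context: Theorem 1 refers to: Ising models $P(\mathbf{x}\mid\theta)\propto\exp\{\langle\theta,T(\mathbf{x})\rangle\}$ on $\{-1,1\}^p$ with $T(\mathbf{x})=(x_sx_t)_{s,t=1}^p$; samples $\{\mathbf x^1_i\}_{i=1}^{n_1}$ i.i.d. from $P(\cdot\mid\theta_1^* )$ and $\{\mathbf x^2_i\}_{i=1}^{n_2}$ i.i.d. from $P(\cdot\mid\theta_2^* )$, independent; $\delta\theta^*=\theta_1^*-\theta_2^*$; $Z(\delta\theta)=E_{X\sim P(\cdot\mid\theta_2^* )}[\exp\{\langle T(X),\delta\theta\rangle\}]$, $r(\mathbf{x}\mid\delta\theta)=\exp\{\langle T(\mathbf{x}),\delta\theta\rangle\}/Z(\delta\theta)$; loss $\mathcal{L}(\delta\theta)=-\frac1{n_1}\sum_i\langle T(\mathbf x_i^1),\delta\theta\rangle+\log\frac1{n_2}\sum_i\exp\{\langle T(\mathbf x_i^2),\delta\theta\rangle\}$; smooth density ratio assumption: for all $\mathbf u$ with $\|\mathbf u\|_2\le\|\delta\theta^*\|_2$ and $\epsilon\in\mathbb R$, $E_{X\sim P(\cdot\mid\theta_2^* )}[\exp\{\epsilon(r(X\mid\delta\theta^*+\mathbf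 u)-1)\}]\le e^{\epsilon^2}$; and the eigenvalue bound $\frac12\lambda_{\max}(\nabla^2\mathcal{L}(\delta\theta^*+\mathbf u))\le\eta_0$ for all $\|\mathbf u\|_2\le\|\delta\theta^*\|_2$. *)

theory Defs
  imports "HOL-Analysis.Analysis"
begin

text \<open>Spin configurations in {-1,1}^p, represented as functions nat => real that are
  +-1 on {..<p} and 0 elsewhere (so the configuration set is finite).\<close>

type_synonym config = "nat \<Rightarrow> real"
type_synonym param = "nat \<times> nat \<Rightarrow> real"

definition idx :: "nat \<Rightarrow> (nat \<times> nat) set" where
  "idx p = {..<p} \<times> {..<p}"

definition configs :: "nat \<Rightarrow> config set" where
  "configs p = {x. (\<forall>s<p. x s = -1 \<or> x s = 1) \<and> (\<forall>s\<ge>p. x s = 0)}"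

definition suffT :: "config \<Rightarrow> param" where
  "suffT x = (\<lambda>(s,t). x s * x t)"

definition ip :: "nat \<Rightarrow> param \<Rightarrow> param \<Rightarrow> real" where
  "ip p a b = (\<Sum>i\<in>idx p. a i * b i)"

definition norm2 :: "nat \<Rightarrow> param \<Rightarrow> real" where
  "norm2 p u = sqrt (\<Sum>i\<in>idx p. (u i)^2)"

definition supnorm :: "nat \<Rightarrow> param \<Rightarrow> real" where
  "supnorm p g = Max ((\<lambda>i. \<bar>g i\<bar>) ` idx p)"

definition ising :: "nat \<Rightarrow> param \<Rightarrow> config \<Rightarrow> real" where
  "ising p \<theta> x = exp (ip p \<theta> (suffT x)) / (\<Sum>y\<in>configs p. exp (ip p \<theta> (suffT y)))"

definition Eising :: "nat \<Rightarrow> param \<Rightarrow> (config \<Rightarrow> real) \<Rightarrow> real" where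
  "Eising p \<theta> f = (\<Sum>x\<in>configs p. ising p \<theta> x * f x)"

definition Zr :: "nat \<Rightarrow> param \<Rightarrow> param \<Rightarrow> real" where
  "Zr p \<theta>2 d = Eising p \<theta>2 (\<lambda>x. exp (ip p (suffT x) d))"

definition ratio :: "nat \<Rightarrow> param \<Rightarrow> param \<Rightarrow> config \<Rightarrow> real" where
  "ratio p \<theta>2 d x = exp (ip p (suffT x) d) / Zr p \<theta>2 d"

definition smooth_ratio :: "nat \<Rightarrow> param \<Rightarrow> param \<Rightarrow> bool" where
  "smooth_ratio p \<theta>1 \<theta>2 \<longleftrightarrow>
     (\<forall>(u::param) (\<epsilon>::real). norm2 p u \<le> norm2 p (\<lambda>i. \<theta>1 i - \<theta>2 i) \<longrightarrow>
        Eising p \<theta>2 (\<lambda>x. exp (\<epsilon> * (ratio p \<theta>2 (\<lambda>i. \<theta>1 i - \<theta>2 i + u i) x - 1)))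
          \<le> exp (\<epsilon>^2))"

definition lossL :: "nat \<Rightarrow> nat \<Rightarrow> nat \<Rightarrow> (nat \<Rightarrow> config) \<Rightarrow> (nat \<Rightarrow> config) \<Rightarrow> param \<Rightarrow> real" where
  "lossL p n1 n2 X1 X2 d =
     - (1 / real n1) * (\<Sum>i<n1. ip p (suffT (X1 i)) d)
     + ln ((1 / real n2) * (\<Sum>i<n2. exp (ip p (suffT (X2 i)) d)))"

definition grad :: "(param \<Rightarrow> real) \<Rightarrow> param \<Rightarrow> param" where
  "grad f d = (\<lambda>j. deriv (\<lambda>h::real. f (\<lambda>i. d i + h * (if i = j then 1 else 0))) 0)"

definition hess :: "(param \<Rightarrow> real) \<Rightarrow> param \<Rightarrow> (nat \<times> nat) \<Rightarrow> (nat \<times> nat) \<Rightarrow> real" where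
  "hess f d j k = deriv (\<lambda>a::real. deriv (\<lambda>b::real.
      f (\<lambda>i. d i + a * (if i = j then 1 else 0) + b * (if i = k then 1 else 0))) 0) 0"

definition lambda_max :: "'i set \<Rightarrow> ('i \<Rightarrow> 'i \<Rightarrow> real) \<Rightarrow> real" where
  "lambda_max I H = Sup {\<mu>. \<exists>v. (\<exists>k\<in>I. v k \<noteq> 0) \<and> (\<forall>j\<in>I. (\<Sum>k\<in>I. H j k * v k) = \<mu> * v j)}"

definition samples :: "nat \<Rightarrow> nat \<Rightarrow> (nat \<Rightarrow> config) set" where
  "samples p n = PiE {..<n} (\<lambda>_. configs p)"

definition prob_samples :: "nat \<Rightarrow> param \<Rightarrow> param \<Rightarrow> nat \<Rightarrow> nat
     \<Rightarrow> ((nat \<Rightarrow> config) \<Rightarrow> (nat \<Rightarrow> config) \<Rightarrow> bool) \<Rightarrow> real" where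
  "prob_samples p \<theta>1 \<theta>2 n1 n2 E =
     (\<Sum>X1\<in>samples p n1. \<Sum>X2\<in>samples p n2.
        (if E X1 X2 then (\<Prod>i<n1. ising p \<theta>1 (X1 i)) * (\<Prod>i<n2. ising p \<theta>2 (X2 i)) else 0))"

end

theory Submission
  imports Defs
begin


definition Pn :: "config set \<Rightarrow> (config \<Rightarrow> real) \<Rightarrow> nat \<Rightarrow> ((nat \<Rightarrow> config) \<Rightarrow> bool) \<Rightarrow> real" where
  "Pn C w n A = (\<Sum>X\<in>PiE {..<n} (\<lambda>_. C). if A X then (\<Prod>i<n. w (X i)) else 0)"

lemma Pn_total:
  assumes "finite C" "sum w C = 1"
  shows "Pn C w n (\<lambda>_. True) = 1"
proof -
  have "(\<Prod>i<n. \<Sum>y\<in>C. w y) = (\<Sum>g\<in>PiE {..<n} (\<lambda>_. C). \<Prod>i<n. w (g i))"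
    by (rule prod_sum_PiE) (use assms in auto)
  then show ?thesis using assms by (simp add: Pn_def)
qed

lemma prodw_nonneg:
  assumes "\<forall>x\<in>C. w x \<ge> 0" "X \<in> PiE {..<n} (\<lambda>_. C)"
  shows "(\<Prod>i<n. w (X i)) \<ge> (0::real)"
  using assms by (intro prod_nonneg) (auto simp: PiE_iff)

lemma Pn_nonneg:
  assumes "\<forall>x\<in>C. w x \<ge> 0"
  shows "Pn C w n A \<ge> 0"
  unfolding Pn_def using prodw_nonneg[OF assms] by (intro sum_nonneg) auto

lemma Pn_compl:
  assumes "finite C" "sum w C = 1"
  shows "Pn C w n A = 1 - Pn C w n (\<lambda>X. \<not> A X)"
proof -
  have "Pn C w n A + Pn C w n (\<lambda>X. \<not> A X) = Pn C w n (\<lambda>_. True)"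
    unfolding Pn_def sum.distrib[symmetric] by (intro sum.cong) auto
  then show ?thesis using Pn_total[OF assms] by simp
qed

lemma Pn_mono:
  assumes "\<forall>x\<in>C. w x \<ge> 0" "\<And>X. X \<in> PiE {..<n} (\<lambda>_. C) \<Longrightarrow> A X \<Longrightarrow> B X"
  shows "Pn C w n A \<le> Pn C w n B"
  unfolding Pn_def using prodw_nonneg[OF assms(1)] assms(2)
  by (intro sum_mono) auto

lemma Pn_union:
  assumes "\<forall>x\<in>C. w x \<ge> 0" "finite J"
  shows "Pn C w n (\<lambda>X. \<exists>j\<in>J. A j X) \<le> (\<Sum>j\<in>J. Pn C w n (A j))"
proof -
  have "Pn C w n (\<lambda>X. \<exists>j\<in>J. A j X) \<le> (\<Sum>X\<in>PiE {..<n} (\<lambda>_. C). \<Sum>j\<in>J. if A j X then (\<Prod>i<n. w (X i)) else 0)"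
    unfolding Pn_def
  proof (intro sum_mono)
    fix X assume X: "X \<in> PiE {..<n} (\<lambda>_. C)"
    have nn: "(\<Prod>i<n. w (X i)) \<ge> 0" using prodw_nonneg[OF assms(1) X] .
    show "(if \<exists>j\<in>J. A j X then \<Prod>i<n. w (X i) else 0) \<le> (\<Sum>j\<in>J. if A j X then \<Prod>i<n. w (X i) else 0)"
    proof (cases "\<exists>j\<in>J. A j X")
      case True
      then obtain j where j: "j \<in> J" "A j X" by blast
      have "(\<Sum>j\<in>J. if A j X then \<Prod>i<n. w (X i) else 0) \<ge> (if A j X then \<Prod>i<n. w (X i) else 0)"
        using nn j assms(2) by (intro member_le_sum) auto
      then show ?thesis using True j by simp
    next
      case False
      then show ?thesis using nn by (simp add: sum_nonneg)
    qed
  qed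
  also have "\<dots> = (\<Sum>j\<in>J. Pn C w n (A j))" unfolding Pn_def by (rule sum.swap)
  finally show ?thesis .
qed

lemma Pn_or:
  assumes "\<forall>x\<in>C. w x \<ge> 0"
  shows "Pn C w n (\<lambda>X. A X \<or> B X) \<le> Pn C w n A + Pn C w n B"
  unfolding Pn_def sum.distrib[symmetric] using prodw_nonneg[OF assms]
  by (intro sum_mono) auto

lemma chernoff:
  assumes C: "finite C" and w: "\<forall>x\<in>C. w x \<ge> 0" and K: "K > 0" and s: "s \<ge> 0"
    and mgf: "(\<Sum>x\<in>C. w x * exp (s / (2*K) * f x)) \<le> exp (K * (s/(2*K))^2)"
  shows "Pn C w n (\<lambda>X. real n * s \<le> (\<Sum>i<n. f (X i))) \<le> exp (- real n * s^2 / (4*K))"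
proof -
  define l where "l = s / (2*K)"
  have l0: "l \<ge> 0" using K s by (simp add: l_def)
  have "Pn C w n (\<lambda>X. real n * s \<le> (\<Sum>i<n. f (X i))) \<le>
     (\<Sum>X\<in>PiE {..<n} (\<lambda>_. C). (\<Prod>i<n. w (X i) * exp (l * f (X i))) * exp (- l * real n * s))"
    unfolding Pn_def
  proof (intro sum_mono)
    fix X assume X: "X \<in> PiE {..<n} (\<lambda>_. C)"
    have nn: "(\<Prod>i<n. w (X i)) \<ge> 0" using prodw_nonneg[OF w X] .
    have eq: "(\<Prod>i<n. w (X i) * exp (l * f (X i))) * exp (- l * real n * s)
       = (\<Prod>i<n. w (X i)) * exp (l * ((\<Sum>i<n. f (X i)) - real n * s))"
      by (simp add: prod.distrib exp_sum[symmetric] sum_distrib_left exp_add[symmetric] algebra_simps)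
    show "(if real n * s \<le> (\<Sum>i<n. f (X i)) then \<Prod>i<n. w (X i) else 0)
        \<le> (\<Prod>i<n. w (X i) * exp (l * f (X i))) * exp (- l * real n * s)"
    proof (cases "real n * s \<le> (\<Sum>i<n. f (X i))")
      case True
      then have "exp (l * ((\<Sum>i<n. f (X i)) - real n * s)) \<ge> 1" using l0 by simp
      then have "(\<Prod>i<n. w (X i)) * 1 \<le> (\<Prod>i<n. w (X i)) * exp (l * ((\<Sum>i<n. f (X i)) - real n * s))"
        using nn by (rule mult_left_mono)
      then show ?thesis unfolding eq using True by simp
    next
      case False
      then show ?thesis unfolding eq using nn by simp
    qed
  qed
  also have "\<dots> = (\<Prod>i<n. \<Sum>y\<in>C. w y * exp (l * f y)) * exp (- l * real n * s)"
    by (subst prod_sum_PiE[where B="\<lambda>_. C"]) (use C in \<open>auto simp: sum_distrib_right\<close>)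
  also have "\<dots> \<le> exp (K * l^2) ^ n * exp (- l * real n * s)"
  proof (intro mult_right_mono)
    have "(\<Sum>y\<in>C. w y * exp (l * f y)) \<ge> 0" using w by (auto intro!: sum_nonneg)
    then show "(\<Prod>i<n. \<Sum>y\<in>C. w y * exp (l * f y)) \<le> exp (K * l^2) ^ n"
      using mgf unfolding l_def[symmetric] by (simp add: power_mono)
  qed simp
  also have "\<dots> = exp (- real n * s^2 / (4*K))"
    using K by (simp add: exp_of_nat_mult[symmetric] exp_add[symmetric] l_def power2_eq_square field_simps)
  finally show ?thesis .
qed



lemma exp_taylor2: "exp (x::real) \<le> 1 + x + x^2 * exp \<bar>x\<bar> / 2"
proof -
  obtain t where t: "\<bar>t\<bar> \<le> \<bar>x\<bar>" "exp x = (\<Sum>m<2. (x ^ m) / fact m) + (exp t / fact 2) * x ^ 2"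
    using Maclaurin_exp_le[of x 2] by blast
  have "exp t \<le> exp \<bar>x\<bar>" using t(1) by simp
  then have "exp t * x^2 \<le> exp \<bar>x\<bar> * x^2" by (simp add: mult_right_mono)
  then show ?thesis using t(2) by (simp add: numeral_2_eq_2 mult.commute)
qed

lemma exp_sq_lower: assumes "(y::real) \<ge> 0" shows "y^2 / 2 \<le> exp y"
proof -
  obtain t where t: "\<bar>t\<bar> \<le> \<bar>y\<bar>" "exp y = (\<Sum>m<3. (y ^ m) / fact m) + (exp t / fact 3) * y ^ 3"
    using Maclaurin_exp_le[of y 3] by blast
  have "(exp t / fact 3) * y ^ 3 \<ge> 0" using assms by simp
  moreover have "(\<Sum>m<3. (y ^ m) / fact m) = 1 + y + y^2/2"
    by (simp add: numeral_3_eq_3 numeral_2_eq_2)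
  ultimately show ?thesis using t(2) assms by simp
qed

lemma mgf_taylor:
  fixes f w :: "config \<Rightarrow> real" and l K :: real
  assumes C: "finite C" and w: "\<forall>x\<in>C. w x \<ge> 0" and w1: "sum w C = 1"
    and mean: "(\<Sum>x\<in>C. w x * f x) = 0"
    and sec: "(\<Sum>x\<in>C. w x * ((f x)^2 * exp \<bar>l * f x\<bar>)) \<le> 2 * K"
  shows "(\<Sum>x\<in>C. w x * exp (l * f x)) \<le> exp (K * l^2)"
proof -
  have "(\<Sum>x\<in>C. w x * exp (l * f x)) \<le> (\<Sum>x\<in>C. w x * (1 + l * f x + l^2 * ((f x)^2 * exp \<bar>l * f x\<bar>) / 2))"
  proof (intro sum_mono mult_left_mono)
    fix x assume "x \<in> C"
    show "exp (l * f x) \<le> 1 + l * f x + l^2 * ((f x)^2 * exp \<bar>l * f x\<bar>) / 2"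
      using exp_taylor2[of "l * f x"] by (simp add: power_mult_distrib)
  qed (use w in auto)
  also have "\<dots> = sum w C + l * (\<Sum>x\<in>C. w x * f x) + l^2 / 2 * (\<Sum>x\<in>C. w x * ((f x)^2 * exp \<bar>l * f x\<bar>))"
    by (simp add: algebra_simps sum.distrib sum_distrib_left sum_divide_distrib)
  also have "\<dots> \<le> 1 + K * l^2"
    using w1 mean mult_left_mono[OF sec, of "l^2/2"] by (simp add: mult.commute mult.left_commute)
  also have "\<dots> \<le> exp (K * l^2)" by (rule exp_ge_add_one_self[unfolded add.commute[of _ 1]]) 
  finally show ?thesis .
qed



lemma configs_finite: "finite (configs p)"
proof -
  have inj: "inj_on (\<lambda>x. restrict x {..<p}) (configs p)"
  proof (rule inj_onI)
    fix x y assume xy: "x \<in> configs p" "y \<in> configs p" "restrict x {..<p} = restrict y {..<p}"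
    show "x = y"
    proof
      fix s show "x s = y s"
      proof (cases "s < p")
        case True then show ?thesis using fun_cong[OF xy(3), of s] by simp
      next
        case False then show ?thesis using xy(1,2) by (simp add: configs_def)
      qed
    qed
  qed
  have "(\<lambda>x. restrict x {..<p}) ` configs p \<subseteq> PiE {..<p} (\<lambda>_. {-1,1})"
    by (auto simp: configs_def PiE_iff split: if_splits)
  then have "finite ((\<lambda>x. restrict x {..<p}) ` configs p)"
    by (rule finite_subset) (auto intro!: finite_PiE)
  then show ?thesis using finite_imageD[OF _ inj] by blast
qed

lemma configs_ne: "configs p \<noteq> {}"
proof -
  have "(\<lambda>s. if s < p then 1 else 0) \<in> configs p" by (auto simp: configs_def)
  then show ?thesis by blast
qed

lemma suffT_bound:
  assumes "x \<in> configs p" "j \<in> idx p"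
  shows "\<bar>suffT x j\<bar> \<le> 1"
proof -
  obtain s t where j: "j = (s,t)" "s < p" "t < p" using assms(2) by (auto simp: idx_def)
  have "\<bar>x s\<bar> = 1" "\<bar>x t\<bar> = 1" using assms(1) j by (auto simp: configs_def)
  then show ?thesis using j by (simp add: suffT_def abs_mult)
qed

definition SS :: "nat \<Rightarrow> param \<Rightarrow> real" where
  "SS p \<theta> = (\<Sum>y\<in>configs p. exp (ip p \<theta> (suffT y)))"

lemma SS_pos: "SS p \<theta> > 0"
  unfolding SS_def using configs_finite configs_ne by (intro sum_pos) auto

lemma ising_pos: "ising p \<theta> x > 0"
  using SS_pos[of p \<theta>] by (simp add: ising_def SS_def[symmetric])

lemma ising_sum: "sum (ising p \<theta>) (configs p) = 1"
  using SS_pos[of p \<theta>] by (simp add: ising_def SS_def[symmetric] sum_divide_distrib[symmetric])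

lemma ip_diff:
  "ip p \<theta>2 (suffT x) + ip p (suffT x) (\<lambda>i. \<theta>1 i - \<theta>2 i) = ip p \<theta>1 (suffT x)"
  unfolding ip_def sum.distrib[symmetric] by (intro sum.cong) (auto simp: algebra_simps)

lemma Zr_eq: "Zr p \<theta>2 (\<lambda>i. \<theta>1 i - \<theta>2 i) = SS p \<theta>1 / SS p \<theta>2"
proof -
  have "Zr p \<theta>2 (\<lambda>i. \<theta>1 i - \<theta>2 i) = (\<Sum>x\<in>configs p. exp (ip p \<theta>1 (suffT x)) / SS p \<theta>2)"
    unfolding Zr_def Eising_def ising_def SS_def[symmetric]
    by (intro sum.cong refl) (simp add: exp_add[symmetric] ip_diff)
  then show ?thesis by (simp add: SS_def sum_divide_distrib)
qed

lemma ising_ratio: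
  "ising p \<theta>2 x * ratio p \<theta>2 (\<lambda>i. \<theta>1 i - \<theta>2 i) x = ising p \<theta>1 x"
proof -
  have "ising p \<theta>2 x * ratio p \<theta>2 (\<lambda>i. \<theta>1 i - \<theta>2 i) x
     = exp (ip p \<theta>2 (suffT x) + ip p (suffT x) (\<lambda>i. \<theta>1 i - \<theta>2 i)) / SS p \<theta>1"
    using SS_pos[of p \<theta>1] SS_pos[of p \<theta>2]
    by (simp add: ising_def ratio_def Zr_eq SS_def[symmetric] exp_add)
  then show ?thesis by (simp add: ip_diff ising_def SS_def)
qed

lemma ratio_pos: "ratio p \<theta>2 (\<lambda>i. \<theta>1 i - \<theta>2 i) x > 0"
  using SS_pos[of p \<theta>1] SS_pos[of p \<theta>2] by (simp add: ratio_def Zr_eq)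

lemma ip_shift:
  assumes "j \<in> idx p"
  shows "ip p (suffT x) (\<lambda>i. d i + h * (if i = j then 1 else 0)) = ip p (suffT x) d + h * suffT x j"
proof -
  have "ip p (suffT x) (\<lambda>i. d i + h * (if i = j then 1 else 0))
      = ip p (suffT x) d + h * (\<Sum>i\<in>idx p. if i = j then suffT x i else 0)"
  proof -
    have "(\<Sum>i\<in>idx p. suffT x i * (d i + h * (if i = j then 1 else 0))) = (\<Sum>i\<in>idx p. suffT x i * d i + h * (if i = j then suffT x i else 0))"
      by (intro sum.cong) (auto simp: algebra_simps)
    then show ?thesis unfolding ip_def by (simp add: sum.distrib sum_distrib_left)
  qed
  also have "\<dots> = ip p (suffT x) d + h * suffT x j"
    using assms by (simp add: idx_def)
  finally show ?thesis .
qed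

lemma grad_lossL:
  assumes j: "j \<in> idx p" and n2: "n2 \<ge> 1"
  shows "grad (lossL p n1 n2 X1 X2) d j =
     - (1/real n1) * (\<Sum>i<n1. suffT (X1 i) j)
     + (\<Sum>i<n2. exp (ip p (suffT (X2 i)) d) * suffT (X2 i) j) / (\<Sum>i<n2. exp (ip p (suffT (X2 i)) d))"
proof -
  have eq: "(\<lambda>h. lossL p n1 n2 X1 X2 (\<lambda>i. d i + h * (if i = j then 1 else 0))) =
     (\<lambda>h. - (1/real n1) * (\<Sum>i<n1. ip p (suffT (X1 i)) d + h * suffT (X1 i) j)
       + ln ((1/real n2) * (\<Sum>i<n2. exp (ip p (suffT (X2 i)) d + h * suffT (X2 i) j))))"
    by (simp add: lossL_def ip_shift[OF j])
  have pos: "(\<Sum>i<n2. exp (ip p (suffT (X2 i)) d + h * suffT (X2 i) j)) > 0" for h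
  proof -
    have "0 \<in> {..<n2}" using n2 by simp
    then show ?thesis by (intro sum_pos) auto
  qed
  define a where "a i = ip p (suffT (X1 i)) d" for i
  define b where "b i = suffT (X1 i) j" for i
  define c where "c i = ip p (suffT (X2 i)) d" for i
  define e where "e i = suffT (X2 i) j" for i
  have dA: "((\<lambda>h. \<Sum>i<n1. a i + h * b i) has_real_derivative (\<Sum>i<n1. b i)) (at 0)"
    by (rule DERIV_sum) (auto intro!: derivative_eq_intros)
  have dB: "((\<lambda>h. \<Sum>i<n2. exp (c i + h * e i)) has_real_derivative (\<Sum>i<n2. exp (c i) * e i)) (at 0)"
    by (rule DERIV_sum) (auto intro!: derivative_eq_intros)
  have dB': "((\<lambda>h. (1/real n2) * (\<Sum>i<n2. exp (c i + h * e i))) has_real_derivative (1/real n2) * (\<Sum>i<n2. exp (c i) * e i)) (at 0)"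
    by (rule DERIV_cmult[OF dB])
  have B0: "(1/real n2) * (\<Sum>i<n2. exp (c i + 0 * e i)) > 0"
    using pos[of 0] n2 unfolding c_def e_def by simp
  have dL: "((\<lambda>h. ln ((1/real n2) * (\<Sum>i<n2. exp (c i + h * e i)))) has_real_derivative
      (1 / ((1/real n2) * (\<Sum>i<n2. exp (c i + 0 * e i)))) * ((1/real n2) * (\<Sum>i<n2. exp (c i) * e i))) (at 0)"
    by (rule DERIV_chain2[OF DERIV_ln_divide[OF B0] dB'])
  have dF: "((\<lambda>h. - (1/real n1) * (\<Sum>i<n1. a i + h * b i) + ln ((1/real n2) * (\<Sum>i<n2. exp (c i + h * e i))))
     has_real_derivative (- (1/real n1) * (\<Sum>i<n1. b i) +
      (1 / ((1/real n2) * (\<Sum>i<n2. exp (c i + 0 * e i)))) * ((1/real n2) * (\<Sum>i<n2. exp (c i) * e i)))) (at 0)"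
    by (rule DERIV_add[OF DERIV_cmult[OF dA] dL])
  have "(1 / ((1/real n2) * (\<Sum>i<n2. exp (c i + 0 * e i)))) * ((1/real n2) * (\<Sum>i<n2. exp (c i) * e i))
     = (\<Sum>i<n2. exp (c i) * e i) / (\<Sum>i<n2. exp (c i))"
    using n2 by simp
  then have "((\<lambda>h. - (1/real n1) * (\<Sum>i<n1. ip p (suffT (X1 i)) d + h * suffT (X1 i) j)
       + ln ((1/real n2) * (\<Sum>i<n2. exp (ip p (suffT (X2 i)) d + h * suffT (X2 i) j))))
     has_real_derivative
     (- (1/real n1) * (\<Sum>i<n1. suffT (X1 i) j)
     + (\<Sum>i<n2. exp (ip p (suffT (X2 i)) d) * suffT (X2 i) j) / (\<Sum>i<n2. exp (ip p (suffT (X2 i)) d)))) (at 0)"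
    using dF unfolding a_def b_def c_def e_def by simp
  then show ?thesis unfolding grad_def eq by (rule DERIV_imp_deriv)
qed



lemma chernoff2:
  fixes f w :: "config \<Rightarrow> real"
  assumes C: "finite C" and w: "\<forall>x\<in>C. w x \<ge> 0" and w1: "sum w C = 1" and K: "K > 0" and s: "s \<ge> 0"
    and mean: "(\<Sum>x\<in>C. w x * f x) = 0"
    and sec: "(\<Sum>x\<in>C. w x * ((f x)^2 * exp \<bar>s/(2*K) * f x\<bar>)) \<le> 2 * K"
  shows "Pn C w n (\<lambda>X. real n * s \<le> (\<Sum>i<n. f (X i)) \<or> real n * s \<le> (\<Sum>i<n. - f (X i)))
          \<le> 2 * exp (- real n * s^2 / (4*K))"
proof -
  have m1: "(\<Sum>x\<in>C. w x * exp (s/(2*K) * f x)) \<le> exp (K * (s/(2*K))^2)"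
    by (rule mgf_taylor[OF C w w1 mean sec])
  have mean': "(\<Sum>x\<in>C. w x * (- f x)) = 0" using mean by (simp add: sum_negf)
  have sec': "(\<Sum>x\<in>C. w x * ((- f x)^2 * exp \<bar>s/(2*K) * (- f x)\<bar>)) \<le> 2 * K" using sec by simp
  have m2: "(\<Sum>x\<in>C. w x * exp (s/(2*K) * (- f x))) \<le> exp (K * (s/(2*K))^2)"
    by (rule mgf_taylor[OF C w w1 mean' sec'])
  have "Pn C w n (\<lambda>X. real n * s \<le> (\<Sum>i<n. f (X i)) \<or> real n * s \<le> (\<Sum>i<n. - f (X i)))
     \<le> Pn C w n (\<lambda>X. real n * s \<le> (\<Sum>i<n. f (X i))) + Pn C w n (\<lambda>X. real n * s \<le> (\<Sum>i<n. - f (X i)))"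
    by (rule Pn_or[OF w])
  also have "\<dots> \<le> exp (- real n * s^2 / (4*K)) + exp (- real n * s^2 / (4*K))"
    using chernoff[OF C w K s m1, of n] chernoff[OF C w K s m2, of n] by simp
  finally show ?thesis by simp
qed

lemma Eising_abs_le:
  assumes "\<forall>x\<in>configs p. \<bar>f x\<bar> \<le> 1"
  shows "\<bar>Eising p \<theta> f\<bar> \<le> 1"
proof -
  have "\<bar>Eising p \<theta> f\<bar> \<le> (\<Sum>x\<in>configs p. \<bar>ising p \<theta> x * f x\<bar>)"
    unfolding Eising_def by (rule sum_abs)
  also have "\<dots> \<le> (\<Sum>x\<in>configs p. ising p \<theta> x * 1)"
    using assms ising_pos[of p \<theta>] by (intro sum_mono) (simp add: abs_mult mult_left_mono less_imp_le)
  also have "\<dots> = 1" using ising_sum by simp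
  finally show ?thesis .
qed

lemma bad1_bound:
  assumes s: "0 \<le> s" "s \<le> 75"
  shows "Pn (configs p) (ising p \<theta>1) n1 (\<lambda>X. \<exists>j\<in>idx p.
      real n1 * s \<le> (\<Sum>i<n1. suffT (X i) j - Eising p \<theta>1 (\<lambda>x. suffT x j)) \<or>
      real n1 * s \<le> (\<Sum>i<n1. - (suffT (X i) j - Eising p \<theta>1 (\<lambda>x. suffT x j))))
    \<le> real (card (idx p)) * (2 * exp (- real n1 * s^2 / 1200))"
proof -
  have w: "\<forall>x\<in>configs p. ising p \<theta>1 x \<ge> 0" using ising_pos by (simp add: less_imp_le)
  have fin: "finite (idx p)" by (simp add: idx_def)
  have "Pn (configs p) (ising p \<theta>1) n1 (\<lambda>X. \<exists>j\<in>idx p.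
      real n1 * s \<le> (\<Sum>i<n1. suffT (X i) j - Eising p \<theta>1 (\<lambda>x. suffT x j)) \<or>
      real n1 * s \<le> (\<Sum>i<n1. - (suffT (X i) j - Eising p \<theta>1 (\<lambda>x. suffT x j))))
    \<le> (\<Sum>j\<in>idx p. Pn (configs p) (ising p \<theta>1) n1 (\<lambda>X.
      real n1 * s \<le> (\<Sum>i<n1. suffT (X i) j - Eising p \<theta>1 (\<lambda>x. suffT x j)) \<or>
      real n1 * s \<le> (\<Sum>i<n1. - (suffT (X i) j - Eising p \<theta>1 (\<lambda>x. suffT x j)))))"
    by (rule Pn_union[OF w fin])
  also have "\<dots> \<le> real (card (idx p)) * (2 * exp (- real n1 * s^2 / 1200))"
  proof (rule sum_bounded_above)
    fix j assume j: "j \<in> idx p"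
    define \<mu> where "\<mu> = Eising p \<theta>1 (\<lambda>x. suffT x j)"
    have mu: "\<bar>\<mu>\<bar> \<le> 1" unfolding \<mu>_def using suffT_bound[OF _ j] by (intro Eising_abs_le) auto
    define f where "f x = suffT x j - \<mu>" for x
    have mean: "(\<Sum>x\<in>configs p. ising p \<theta>1 x * f x) = 0"
      using ising_sum[of p \<theta>1]
      by (simp add: f_def \<mu>_def Eising_def right_diff_distrib sum_subtractf sum_distrib_right[symmetric])
    have pt: "ising p \<theta>1 x * ((f x)^2 * exp \<bar>s/(2*300) * f x\<bar>) \<le> ising p \<theta>1 x * 12"
      if x: "x \<in> configs p" for x
    proof -
      have fa: "\<bar>f x\<bar> \<le> 2" using suffT_bound[OF x j] mu by (simp add: f_def)
      have "(f x)^2 = \<bar>f x\<bar> * \<bar>f x\<bar>" by (simp add: power2_eq_square)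
      also have "\<dots> \<le> 2 * 2" using fa by (intro mult_mono) auto
      finally have f2: "(f x)^2 \<le> 4" by simp
      have "\<bar>s/(2*300) * f x\<bar> = s/600 * \<bar>f x\<bar>" using s by (simp add: abs_mult)
      also have "\<dots> \<le> 75/600 * 2" using s fa by (intro mult_mono) auto
      finally have "\<bar>s/(2*300) * f x\<bar> \<le> 1" by simp
      then have "exp \<bar>s/(2*300) * f x\<bar> \<le> 3" using exp_le by (meson exp_le_cancel_iff order_trans)
      then have "(f x)^2 * exp \<bar>s/(2*300) * f x\<bar> \<le> 4 * 3" using f2 by (intro mult_mono) auto
      then show ?thesis using ising_pos[of p \<theta>1 x] by (intro mult_left_mono) auto
    qed
    have sec: "(\<Sum>x\<in>configs p. ising p \<theta>1 x * ((f x)^2 * exp \<bar>s/(2*300) * f x\<bar>)) \<le> 2 * 300"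
    proof -
      have "(\<Sum>x\<in>configs p. ising p \<theta>1 x * ((f x)^2 * exp \<bar>s/(2*300) * f x\<bar>)) \<le> (\<Sum>x\<in>configs p. ising p \<theta>1 x * 12)"
        using pt by (intro sum_mono) auto
      also have "\<dots> = 12" using ising_sum[of p \<theta>1] by (simp add: sum_distrib_right[symmetric])
      finally show ?thesis by simp
    qed
    have "Pn (configs p) (ising p \<theta>1) n1 (\<lambda>X. real n1 * s \<le> (\<Sum>i<n1. f (X i)) \<or> real n1 * s \<le> (\<Sum>i<n1. - f (X i)))
       \<le> 2 * exp (- real n1 * s^2 / (4*300))"
      by (rule chernoff2[OF configs_finite w ising_sum _ s(1) mean sec]) simp
    then show "Pn (configs p) (ising p \<theta>1) n1 (\<lambda>X.
      real n1 * s \<le> (\<Sum>i<n1. suffT (X i) j - Eising p \<theta>1 (\<lambda>x. suffT x j)) \<or>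
      real n1 * s \<le> (\<Sum>i<n1. - (suffT (X i) j - Eising p \<theta>1 (\<lambda>x. suffT x j))))
      \<le> 2 * exp (- real n1 * s^2 / 1200)"
      by (simp add: f_def \<mu>_def)
  qed
  finally show ?thesis .
qed

lemma smooth_inst:
  assumes "smooth_ratio p \<theta>1 \<theta>2"
  shows "(\<Sum>x\<in>configs p. ising p \<theta>2 x * exp (\<epsilon> * (ratio p \<theta>2 (\<lambda>i. \<theta>1 i - \<theta>2 i) x - 1))) \<le> exp (\<epsilon>^2)"
proof -
  have "norm2 p (\<lambda>_. 0) \<le> norm2 p (\<lambda>i. \<theta>1 i - \<theta>2 i)" by (simp add: norm2_def sum_nonneg)
  then have "Eising p \<theta>2 (\<lambda>x. exp (\<epsilon> * (ratio p \<theta>2 (\<lambda>i. \<theta>1 i - \<theta>2 i + 0) x - 1))) \<le> exp (\<epsilon>^2)"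
    using assms unfolding smooth_ratio_def by blast
  then show ?thesis by (simp add: Eising_def)
qed

lemma badD_bound:
  assumes sm: "smooth_ratio p \<theta>1 \<theta>2"
  shows "Pn (configs p) (ising p \<theta>2) n2 (\<lambda>X. real n2 * (1/2) \<le> (\<Sum>i<n2. 1 - ratio p \<theta>2 (\<lambda>i. \<theta>1 i - \<theta>2 i) (X i)))
     \<le> exp (- real n2 / 16)"
proof -
  have w: "\<forall>x\<in>configs p. ising p \<theta>2 x \<ge> 0" using ising_pos by (simp add: less_imp_le)
  have "(\<Sum>x\<in>configs p. ising p \<theta>2 x * exp ((1/2)/(2*1) * (1 - ratio p \<theta>2 (\<lambda>i. \<theta>1 i - \<theta>2 i) x)))
     = (\<Sum>x\<in>configs p. ising p \<theta>2 x * exp ((-1/4) * (ratio p \<theta>2 (\<lambda>i. \<theta>1 i - \<theta>2 i) x - 1)))"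
    by (intro sum.cong) (auto simp: algebra_simps)
  also have "\<dots> \<le> exp ((-1/4)^2)" by (rule smooth_inst[OF sm])
  also have "\<dots> = exp (1 * ((1/2)/(2*1))^2)" by (simp add: power2_eq_square)
  finally have m: "(\<Sum>x\<in>configs p. ising p \<theta>2 x * exp ((1/2)/(2*1) * (1 - ratio p \<theta>2 (\<lambda>i. \<theta>1 i - \<theta>2 i) x)))
     \<le> exp (1 * ((1/2)/(2*1))^2)" .
  have "Pn (configs p) (ising p \<theta>2) n2 (\<lambda>X. real n2 * (1/2) \<le> (\<Sum>i<n2. 1 - ratio p \<theta>2 (\<lambda>i. \<theta>1 i - \<theta>2 i) (X i)))
     \<le> exp (- real n2 * (1/2)^2 / (4*1))"
    by (rule chernoff[OF configs_finite w _ _ m]) auto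
  then show ?thesis by (simp add: power2_eq_square)
qed

lemma bad2_bound:
  assumes sm: "smooth_ratio p \<theta>1 \<theta>2" and s: "0 \<le> s" "s \<le> 75"
  shows "Pn (configs p) (ising p \<theta>2) n2 (\<lambda>X. \<exists>j\<in>idx p.
      real n2 * s \<le> (\<Sum>i<n2. ratio p \<theta>2 (\<lambda>i. \<theta>1 i - \<theta>2 i) (X i) * (suffT (X i) j - Eising p \<theta>1 (\<lambda>x. suffT x j))) \<or>
      real n2 * s \<le> (\<Sum>i<n2. - (ratio p \<theta>2 (\<lambda>i. \<theta>1 i - \<theta>2 i) (X i) * (suffT (X i) j - Eising p \<theta>1 (\<lambda>x. suffT x j)))))
    \<le> real (card (idx p)) * (2 * exp (- real n2 * s^2 / 1200))"
proof -
  define r where "r = ratio p \<theta>2 (\<lambda>i. \<theta>1 i - \<theta>2 i)"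
  have rpos: "r x > 0" for x unfolding r_def by (rule ratio_pos)
  have w: "\<forall>x\<in>configs p. ising p \<theta>2 x \<ge> 0" using ising_pos by (simp add: less_imp_le)
  have fin: "finite (idx p)" by (simp add: idx_def)
  have half: "(\<Sum>x\<in>configs p. ising p \<theta>2 x * exp (r x / 2)) \<le> 3"
  proof -
    have "(\<Sum>x\<in>configs p. ising p \<theta>2 x * exp (r x / 2))
       = exp (1/2) * (\<Sum>x\<in>configs p. ising p \<theta>2 x * exp ((1/2) * (r x - 1)))"
      unfolding sum_distrib_left
    proof (intro sum.cong refl)
      fix x
      have "r x / 2 = 1/2 + (1/2) * (r x - 1)" by (simp add: field_simps)
      then have "exp (r x / 2) = exp (1/2) * exp ((1/2) * (r x - 1))"
        by (metis exp_add)
      then show "ising p \<theta>2 x * exp (r x / 2) = exp (1/2) * (ising p \<theta>2 x * exp ((1/2) * (r x - 1)))"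
        by simp
    qed
    also have "\<dots> \<le> exp (1/2) * exp ((1/2)^2)"
      using smooth_inst[OF sm, of "1/2"] unfolding r_def by (intro mult_left_mono) auto
    also have "\<dots> = exp (3/4)" by (simp add: exp_add[symmetric] power2_eq_square)
    also have "\<dots> \<le> exp 1" by simp
    also have "\<dots> \<le> 3" by (rule exp_le)
    finally show ?thesis .
  qed
  have "Pn (configs p) (ising p \<theta>2) n2 (\<lambda>X. \<exists>j\<in>idx p.
      real n2 * s \<le> (\<Sum>i<n2. r (X i) * (suffT (X i) j - Eising p \<theta>1 (\<lambda>x. suffT x j))) \<or>
      real n2 * s \<le> (\<Sum>i<n2. - (r (X i) * (suffT (X i) j - Eising p \<theta>1 (\<lambda>x. suffT x j)))))
    \<le> (\<Sum>j\<in>idx p. Pn (configs p) (ising p \<theta>2) n2 (\<lambda>X.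
      real n2 * s \<le> (\<Sum>i<n2. r (X i) * (suffT (X i) j - Eising p \<theta>1 (\<lambda>x. suffT x j))) \<or>
      real n2 * s \<le> (\<Sum>i<n2. - (r (X i) * (suffT (X i) j - Eising p \<theta>1 (\<lambda>x. suffT x j))))))"
    by (rule Pn_union[OF w fin])
  also have "\<dots> \<le> real (card (idx p)) * (2 * exp (- real n2 * s^2 / 1200))"
  proof (rule sum_bounded_above)
    fix j assume j: "j \<in> idx p"
    define \<mu> where "\<mu> = Eising p \<theta>1 (\<lambda>x. suffT x j)"
    have mu: "\<bar>\<mu>\<bar> \<le> 1" unfolding \<mu>_def using suffT_bound[OF _ j] by (intro Eising_abs_le) auto
    define f where "f x = r x * (suffT x j - \<mu>)" for x
    have mean: "(\<Sum>x\<in>configs p. ising p \<theta>2 x * f x) = 0"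
    proof -
      have "(\<Sum>x\<in>configs p. ising p \<theta>2 x * f x) = (\<Sum>x\<in>configs p. ising p \<theta>1 x * (suffT x j - \<mu>))"
        unfolding f_def r_def by (intro sum.cong refl) (simp add: mult.assoc[symmetric] ising_ratio)
      also have "\<dots> = 0"
        using ising_sum[of p \<theta>1]
        by (simp add: \<mu>_def Eising_def right_diff_distrib sum_subtractf sum_distrib_right[symmetric])
      finally show ?thesis .
    qed
    have pt: "ising p \<theta>2 x * ((f x)^2 * exp \<bar>s/(2*300) * f x\<bar>) \<le> ising p \<theta>2 x * (128 * exp (r x / 2))"
      if x: "x \<in> configs p" for x
    proof -
      have ta: "\<bar>suffT x j - \<mu>\<bar> \<le> 2" using suffT_bound[OF x j] mu by simp
      have fa: "\<bar>f x\<bar> \<le> 2 * r x" unfolding f_def using ta rpos[of x]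
        by (simp add: abs_mult mult.commute mult_right_mono less_imp_le)
      have "(f x)^2 = \<bar>f x\<bar> * \<bar>f x\<bar>" by (simp add: power2_eq_square)
      also have "\<dots> \<le> (2 * r x) * (2 * r x)" using fa by (intro mult_mono) auto
      finally have f2: "(f x)^2 \<le> 4 * (r x)^2" by (simp add: power2_eq_square)
      have "\<bar>s/(2*300) * f x\<bar> = s/600 * \<bar>f x\<bar>" using s by (simp add: abs_mult)
      also have "\<dots> \<le> 75/600 * (2 * r x)" using s fa by (intro mult_mono) auto
      finally have "\<bar>s/(2*300) * f x\<bar> \<le> r x / 4" by simp
      then have e1: "exp \<bar>s/(2*300) * f x\<bar> \<le> exp (r x / 4)" by simp
      have "(r x / 4)^2 / 2 \<le> exp (r x / 4)" using rpos[of x] by (intro exp_sq_lower) auto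
      then have r2: "(r x)^2 \<le> 32 * exp (r x / 4)" by (simp add: power_divide)
      have "(f x)^2 * exp \<bar>s/(2*300) * f x\<bar> \<le> (4 * (r x)^2) * exp (r x / 4)"
        using f2 e1 by (intro mult_mono) auto
      also have "\<dots> \<le> (4 * (32 * exp (r x / 4))) * exp (r x / 4)"
        using r2 by (intro mult_right_mono) auto
      also have "\<dots> = 128 * exp (r x / 2)" by (simp add: exp_add[symmetric])
      finally show ?thesis using ising_pos[of p \<theta>2 x] by (intro mult_left_mono) auto
    qed
    have sec: "(\<Sum>x\<in>configs p. ising p \<theta>2 x * ((f x)^2 * exp \<bar>s/(2*300) * f x\<bar>)) \<le> 2 * 300"
    proof -
      have "(\<Sum>x\<in>configs p. ising p \<theta>2 x * ((f x)^2 * exp \<bar>s/(2*300) * f x\<bar>))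
          \<le> (\<Sum>x\<in>configs p. ising p \<theta>2 x * (128 * exp (r x / 2)))"
        using pt by (intro sum_mono) auto
      also have "\<dots> = 128 * (\<Sum>x\<in>configs p. ising p \<theta>2 x * exp (r x / 2))"
        by (simp add: sum_distrib_left algebra_simps)
      also have "\<dots> \<le> 128 * 3" using half by simp
      finally show ?thesis by simp
    qed
    have "Pn (configs p) (ising p \<theta>2) n2 (\<lambda>X. real n2 * s \<le> (\<Sum>i<n2. f (X i)) \<or> real n2 * s \<le> (\<Sum>i<n2. - f (X i)))
       \<le> 2 * exp (- real n2 * s^2 / (4*300))"
      by (rule chernoff2[OF configs_finite w ising_sum _ s(1) mean sec]) simp
    then show "Pn (configs p) (ising p \<theta>2) n2 (\<lambda>X.
      real n2 * s \<le> (\<Sum>i<n2. r (X i) * (suffT (X i) j - Eising p \<theta>1 (\<lambda>x. suffT x j))) \<or>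
      real n2 * s \<le> (\<Sum>i<n2. - (r (X i) * (suffT (X i) j - Eising p \<theta>1 (\<lambda>x. suffT x j)))))
      \<le> 2 * exp (- real n2 * s^2 / 1200)"
      by (simp add: f_def \<mu>_def)
  qed
  finally show ?thesis unfolding r_def .
qed



lemma prob_samples_ge:
  assumes "\<And>X1 X2. X1 \<in> samples p n1 \<Longrightarrow> X2 \<in> samples p n2 \<Longrightarrow> G1 X1 \<Longrightarrow> G2 X2 \<Longrightarrow> E X1 X2"
  shows "prob_samples p \<theta>1 \<theta>2 n1 n2 E \<ge> Pn (configs p) (ising p \<theta>1) n1 G1 * Pn (configs p) (ising p \<theta>2) n2 G2"
proof -
  have w1: "\<forall>x\<in>configs p. ising p \<theta>1 x \<ge> 0" and w2: "\<forall>x\<in>configs p. ising p \<theta>2 x \<ge> 0"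
    using ising_pos by (auto simp: less_imp_le)
  have "Pn (configs p) (ising p \<theta>1) n1 G1 * Pn (configs p) (ising p \<theta>2) n2 G2
    = (\<Sum>X1\<in>samples p n1. \<Sum>X2\<in>samples p n2.
         (if G1 X1 then (\<Prod>i<n1. ising p \<theta>1 (X1 i)) else 0) * (if G2 X2 then (\<Prod>i<n2. ising p \<theta>2 (X2 i)) else 0))"
    unfolding Pn_def samples_def by (rule sum_product)
  also have "\<dots> \<le> prob_samples p \<theta>1 \<theta>2 n1 n2 E"
    unfolding prob_samples_def
  proof (intro sum_mono)
    fix X1 X2 assume X1: "X1 \<in> samples p n1" and X2: "X2 \<in> samples p n2"
    have a: "(\<Prod>i<n1. ising p \<theta>1 (X1 i)) \<ge> 0" using prodw_nonneg[OF w1] X1 by (simp add: samples_def)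
    have b: "(\<Prod>i<n2. ising p \<theta>2 (X2 i)) \<ge> 0" using prodw_nonneg[OF w2] X2 by (simp add: samples_def)
    show "(if G1 X1 then (\<Prod>i<n1. ising p \<theta>1 (X1 i)) else 0) * (if G2 X2 then (\<Prod>i<n2. ising p \<theta>2 (X2 i)) else 0)
      \<le> (if E X1 X2 then (\<Prod>i<n1. ising p \<theta>1 (X1 i)) * (\<Prod>i<n2. ising p \<theta>2 (X2 i)) else 0)"
      using assms[OF X1 X2] a b by auto
  qed
  finally show ?thesis .
qed

lemma prob_samples_nonneg: "prob_samples p \<theta>1 \<theta>2 n1 n2 E \<ge> 0"
  unfolding prob_samples_def
  by (intro sum_nonneg) (auto intro!: mult_nonneg_nonneg prod_nonneg simp: less_imp_le ising_pos)

lemma grad_ratio_form: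
  assumes j: "j \<in> idx p" and n2: "n2 \<ge> 1"
  shows "grad (lossL p n1 n2 X1 X2) (\<lambda>i. \<theta>1 i - \<theta>2 i) j =
     - (1/real n1) * (\<Sum>i<n1. suffT (X1 i) j)
     + (\<Sum>i<n2. ratio p \<theta>2 (\<lambda>i. \<theta>1 i - \<theta>2 i) (X2 i) * suffT (X2 i) j)
       / (\<Sum>i<n2. ratio p \<theta>2 (\<lambda>i. \<theta>1 i - \<theta>2 i) (X2 i))"
proof -
  define Z where "Z = Zr p \<theta>2 (\<lambda>i. \<theta>1 i - \<theta>2 i)"
  have Z: "Z > 0" unfolding Z_def Zr_eq using SS_pos[of p \<theta>1] SS_pos[of p \<theta>2] by simp
  have "(\<Sum>i<n2. ratio p \<theta>2 (\<lambda>i. \<theta>1 i - \<theta>2 i) (X2 i) * suffT (X2 i) j)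
       / (\<Sum>i<n2. ratio p \<theta>2 (\<lambda>i. \<theta>1 i - \<theta>2 i) (X2 i))
     = ((\<Sum>i<n2. exp (ip p (suffT (X2 i)) (\<lambda>i. \<theta>1 i - \<theta>2 i)) * suffT (X2 i) j) / Z)
       / ((\<Sum>i<n2. exp (ip p (suffT (X2 i)) (\<lambda>i. \<theta>1 i - \<theta>2 i))) / Z)"
    unfolding ratio_def Z_def[symmetric] by (simp add: sum_divide_distrib)
  also have "\<dots> = (\<Sum>i<n2. exp (ip p (suffT (X2 i)) (\<lambda>i. \<theta>1 i - \<theta>2 i)) * suffT (X2 i) j)
       / (\<Sum>i<n2. exp (ip p (suffT (X2 i)) (\<lambda>i. \<theta>1 i - \<theta>2 i)))"
    using Z by simp
  finally show ?thesis using grad_lossL[OF j n2] by simp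
qed

lemma part1:
  fixes A m \<mu> s :: real
  assumes "m > 0" "A - m * \<mu> < m * s" "- (A - m * \<mu>) < m * s"
  shows "\<bar>- (1/m) * A + \<mu>\<bar> \<le> s"
proof -
  have "\<bar>A - m * \<mu>\<bar> \<le> m * s" using assms by linarith
  then have "\<bar>A - m * \<mu>\<bar> / m \<le> s" using assms(1) by (simp add: divide_le_eq mult.commute)
  moreover have "\<bar>A - m * \<mu>\<bar> / m = \<bar>- (1/m) * A + \<mu>\<bar>"
    using assms(1) by (simp add: abs_div_pos[symmetric] field_simps abs_minus_commute)
  ultimately show ?thesis by simp
qed

lemma part2:
  fixes B R m \<mu> s :: real
  assumes "m > 0" "R > m / 2" "B - \<mu> * R < m * s" "- (B - \<mu> * R) < m * s" "s \<ge> 0"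
  shows "\<bar>B / R - \<mu>\<bar> \<le> 2 * s"
proof -
  have R: "R > 0" using assms by linarith
  have "\<bar>B - \<mu> * R\<bar> \<le> m * s" using assms by linarith
  also have "\<dots> \<le> (2 * R) * s" using assms by (intro mult_right_mono) auto
  finally have "\<bar>B - \<mu> * R\<bar> / R \<le> 2 * s" using R by (simp add: divide_le_eq mult.commute mult.left_commute)
  moreover have "\<bar>B - \<mu> * R\<bar> / R = \<bar>B / R - \<mu>\<bar>"
    using R by (simp add: abs_div_pos[symmetric] field_simps)
  ultimately show ?thesis by simp
qed



lemma prod_lower:
  fixes a b x y :: real
  assumes "a \<ge> 1 - x" "b \<ge> 1 - y" "a \<ge> 0" "b \<ge> 0" "x \<ge> 0" "y \<ge> 0"
  shows "a * b \<ge> 1 - x - y"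
proof (cases "1 - x \<le> 0 \<or> 1 - y \<le> 0")
  case True
  then have "1 - x - y \<le> 0" using assms by linarith
  also have "0 \<le> a * b" using assms by simp
  finally show ?thesis .
next
  case False
  then have "(1 - x) * (1 - y) \<le> a * b" using assms by (intro mult_mono) auto
  moreover have "(1 - x) * (1 - y) = 1 - x - y + x * y" by (simp add: algebra_simps)
  moreover have "x * y \<ge> 0" using assms by simp
  ultimately show ?thesis by linarith
qed

lemma supnorm_le:
  assumes "p \<ge> 1" "\<forall>j\<in>idx p. \<bar>g j\<bar> \<le> b"
  shows "supnorm p g \<le> b"
proof -
  have "(0,0) \<in> idx p" using assms(1) by (simp add: idx_def)
  then have "idx p \<noteq> {}" by blast
  moreover have "finite (idx p)" by (simp add: idx_def)
  ultimately show ?thesis unfolding supnorm_def using assms(2) by (simp add: Max_le_iff)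
qed

lemma samples_mem: "X \<in> samples p n \<Longrightarrow> i < n \<Longrightarrow> X i \<in> configs p"
  by (auto simp: samples_def PiE_iff)

lemma grad_le_2:
  assumes p: "p \<ge> 1" and n1: "n1 \<ge> 1" and n2: "n2 \<ge> 1" and X1: "X1 \<in> samples p n1" and X2: "X2 \<in> samples p n2"
    and j: "j \<in> idx p"
  shows "\<bar>grad (lossL p n1 n2 X1 X2) (\<lambda>i. \<theta>1 i - \<theta>2 i) j\<bar> \<le> 2"
proof -
  define r where "r = ratio p \<theta>2 (\<lambda>i. \<theta>1 i - \<theta>2 i)"
  have rpos: "r x > 0" for x unfolding r_def by (rule ratio_pos)
  have "\<bar>\<Sum>i<n1. suffT (X1 i) j\<bar> \<le> (\<Sum>i<n1. \<bar>suffT (X1 i) j\<bar>)" by (rule sum_abs)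
  also have "\<dots> \<le> (\<Sum>i<n1. 1)" using suffT_bound[OF samples_mem[OF X1] j] by (intro sum_mono) auto
  finally have a: "\<bar>\<Sum>i<n1. suffT (X1 i) j\<bar> \<le> real n1" by simp
  have a': "\<bar>- (1/real n1) * (\<Sum>i<n1. suffT (X1 i) j)\<bar> \<le> 1"
    using a n1 by (simp add: abs_mult divide_le_eq)
  have R: "(\<Sum>i<n2. r (X2 i)) > 0"
  proof -
    have "0 \<in> {..<n2}" using n2 by simp
    then show ?thesis using rpos by (intro sum_pos) auto
  qed
  have "\<bar>\<Sum>i<n2. r (X2 i) * suffT (X2 i) j\<bar> \<le> (\<Sum>i<n2. \<bar>r (X2 i) * suffT (X2 i) j\<bar>)" by (rule sum_abs)
  also have "\<dots> \<le> (\<Sum>i<n2. r (X2 i))"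
  proof (intro sum_mono)
    fix i assume "i \<in> {..<n2}"
    then have "\<bar>suffT (X2 i) j\<bar> \<le> 1" using suffT_bound[OF samples_mem[OF X2] j] by simp
    then show "\<bar>r (X2 i) * suffT (X2 i) j\<bar> \<le> r (X2 i)"
      using rpos[of "X2 i"] by (simp add: abs_mult mult_left_le)
  qed
  finally have "\<bar>(\<Sum>i<n2. r (X2 i) * suffT (X2 i) j) / (\<Sum>i<n2. r (X2 i))\<bar> \<le> 1"
    using R by (simp add: divide_le_eq)
  then show ?thesis unfolding grad_ratio_form[OF j n2] r_def[symmetric] using a' by linarith
qed

lemma main:
  assumes p: "p \<ge> 1" and n1: "n1 \<ge> 1" and n2: "n2 \<ge> 1" and sm: "smooth_ratio p \<theta>1 \<theta>2"
  shows "prob_samples p \<theta>1 \<theta>2 n1 n2 (\<lambda>X1 X2. supnorm p (grad (lossL p n1 n2 X1 X2) (\<lambda>i. \<theta>1 i - \<theta>2 i))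
            \<le> 180 * sqrt (ln (real p)) / sqrt (real (min n1 n2))) \<ge> 1 - 5 / real p"
proof (cases "p = 1")
  case True
  have "1 - 5 / real p \<le> 0" using True by simp
  then show ?thesis by (meson order_trans prob_samples_nonneg)
next
  case False
  then have p2: "real p \<ge> 2" using p by simp
  define L where "L = ln (real p)"
  have L: "L > 0" unfolding L_def using p2 by simp
  define n where "n = min n1 n2"
  have n: "n \<ge> 1" "n \<le> n1" "n \<le> n2" using n1 n2 by (auto simp: n_def)
  define B where "B = 180 * sqrt L / sqrt (real n)"
  have Bdef: "180 * sqrt (ln (real p)) / sqrt (real (min n1 n2)) = B"
    by (simp add: B_def L_def n_def)
  define E where "E = (\<lambda>X1 X2. supnorm p (grad (lossL p n1 n2 X1 X2) (\<lambda>i. \<theta>1 i - \<theta>2 i)) \<le> B)"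
  have w1: "\<forall>x\<in>configs p. ising p \<theta>1 x \<ge> 0" and w2: "\<forall>x\<in>configs p. ising p \<theta>2 x \<ge> 0"
    using ising_pos by (auto simp: less_imp_le)
  have "prob_samples p \<theta>1 \<theta>2 n1 n2 E \<ge> 1 - 5 / real p"
  proof (cases "B \<ge> 2")
    case True
    have "prob_samples p \<theta>1 \<theta>2 n1 n2 E \<ge> Pn (configs p) (ising p \<theta>1) n1 (\<lambda>_. True) * Pn (configs p) (ising p \<theta>2) n2 (\<lambda>_. True)"
    proof (rule prob_samples_ge)
      fix X1 X2 assume X1: "X1 \<in> samples p n1" and X2: "X2 \<in> samples p n2"
      show "E X1 X2" unfolding E_def
      proof (intro supnorm_le[OF p] ballI)
        fix j assume j: "j \<in> idx p"
        have "\<bar>grad (lossL p n1 n2 X1 X2) (\<lambda>i. \<theta>1 i - \<theta>2 i) j\<bar> \<le> 2"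
          by (rule grad_le_2[OF p n1 n2 X1 X2 j])
        then show "\<bar>grad (lossL p n1 n2 X1 X2) (\<lambda>i. \<theta>1 i - \<theta>2 i) j\<bar> \<le> B" using True by linarith
      qed
    qed
    then have "prob_samples p \<theta>1 \<theta>2 n1 n2 E \<ge> 1" using Pn_total[OF configs_finite ising_sum] by simp
    moreover have "5 / real p \<ge> 0" by simp
    ultimately show ?thesis by linarith
  next
    case False
    then have cB: "sqrt L / sqrt (real n) < 1/90" unfolding B_def by simp
    have sn: "sqrt (real n) > 0" using n by simp
    have "90 * sqrt L < sqrt (real n)" using cB sn by (simp add: divide_less_eq mult.commute)
    then have "sqrt (8100 * L) < sqrt (real n)" by (simp add: real_sqrt_mult)
    then have nL: "8100 * L < real n" by simp
    define s1 where "s1 = 60 * sqrt L / sqrt (real n1)"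
    define s2 where "s2 = 60 * sqrt L / sqrt (real n2)"
    have s1le: "s1 \<le> 60 * (sqrt L / sqrt (real n))" unfolding s1_def using n sn L
      by (simp add: divide_left_mono)
    have s2le: "s2 \<le> 60 * (sqrt L / sqrt (real n))" unfolding s2_def using n sn L
      by (simp add: divide_left_mono)
    have s1nn: "s1 \<ge> 0" and s2nn: "s2 \<ge> 0" using L by (auto simp: s1_def s2_def)
    have s1s: "s1 \<le> 75" "s2 \<le> 75" using s1le s2le cB by linarith+
    have sq1: "real n1 * s1^2 = 3600 * L" using n1 L by (simp add: s1_def power_divide power_mult_distrib)
    have sq2: "real n2 * s2^2 = 3600 * L" using n2 L by (simp add: s2_def power_divide power_mult_distrib)
    have ep: "exp (- (3 * L)) = 1 / real p ^ 3"
    proof -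
      have "exp (real 3 * L) = exp L ^ 3" by (rule exp_of_nat_mult)
      then have "exp (3 * L) = real p ^ 3" unfolding L_def using p2 by simp
      then show ?thesis by (simp add: exp_minus inverse_eq_divide)
    qed
    have e1: "exp (- real n1 * s1^2 / 1200) = 1 / real p ^ 3"
    proof -
      have "- real n1 * s1^2 / 1200 = - (3 * L)" using sq1 by simp
      then show ?thesis using ep by simp
    qed
    have e2: "exp (- real n2 * s2^2 / 1200) = 1 / real p ^ 3"
    proof -
      have "- real n2 * s2^2 / 1200 = - (3 * L)" using sq2 by simp
      then show ?thesis using ep by simp
    qed
    have card: "real (card (idx p)) = real p ^ 2"
      by (simp add: idx_def card_cartesian_product power2_eq_square)
    have cb: "real p ^ 2 * (2 * (1 / real p ^ 3)) = 2 / real p"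
      using p2 by (simp add: field_simps power2_eq_square power3_eq_cube)
    define \<mu> where "\<mu> j = Eising p \<theta>1 (\<lambda>x. suffT x j)" for j
    define r where "r = ratio p \<theta>2 (\<lambda>i. \<theta>1 i - \<theta>2 i)"
    define bad1 where "bad1 X = (\<exists>j\<in>idx p.
      real n1 * s1 \<le> (\<Sum>i<n1. suffT (X i) j - Eising p \<theta>1 (\<lambda>x. suffT x j)) \<or>
      real n1 * s1 \<le> (\<Sum>i<n1. - (suffT (X i) j - Eising p \<theta>1 (\<lambda>x. suffT x j))))" for X
    define badD where "badD X = (real n2 * (1/2) \<le> (\<Sum>i<n2. 1 - ratio p \<theta>2 (\<lambda>i. \<theta>1 i - \<theta>2 i) (X i)))" for X
    define bad2 where "bad2 X = (\<exists>j\<in>idx p.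
      real n2 * s2 \<le> (\<Sum>i<n2. ratio p \<theta>2 (\<lambda>i. \<theta>1 i - \<theta>2 i) (X i) * (suffT (X i) j - Eising p \<theta>1 (\<lambda>x. suffT x j))) \<or>
      real n2 * s2 \<le> (\<Sum>i<n2. - (ratio p \<theta>2 (\<lambda>i. \<theta>1 i - \<theta>2 i) (X i) * (suffT (X i) j - Eising p \<theta>1 (\<lambda>x. suffT x j)))))" for X
    have P1: "Pn (configs p) (ising p \<theta>1) n1 bad1 \<le> 2 / real p"
    proof -
      have "Pn (configs p) (ising p \<theta>1) n1 bad1 \<le> real (card (idx p)) * (2 * exp (- real n1 * s1^2 / 1200))"
        unfolding bad1_def by (rule bad1_bound[OF s1nn s1s(1)])
      then show ?thesis unfolding e1 card cb .
    qed
    have PD: "Pn (configs p) (ising p \<theta>2) n2 badD \<le> 1 / real p"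
    proof -
      have "exp (- real n2 / 16) \<le> exp (- L)" using nL n by simp
      also have "\<dots> = 1 / real p" unfolding L_def using p2 by (simp add: exp_minus inverse_eq_divide)
      moreover have "Pn (configs p) (ising p \<theta>2) n2 badD \<le> exp (- real n2 / 16)"
        unfolding badD_def by (rule badD_bound[OF sm])
      ultimately show ?thesis by linarith
    qed
    have P2: "Pn (configs p) (ising p \<theta>2) n2 bad2 \<le> 2 / real p"
    proof -
      have "Pn (configs p) (ising p \<theta>2) n2 bad2 \<le> real (card (idx p)) * (2 * exp (- real n2 * s2^2 / 1200))"
        unfolding bad2_def by (rule bad2_bound[OF sm s2nn s1s(2)])
      then show ?thesis unfolding e2 card cb .
    qed
    have G1: "Pn (configs p) (ising p \<theta>1) n1 (\<lambda>X. \<not> bad1 X) \<ge> 1 - 2 / real p"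
      using Pn_compl[OF configs_finite[of p] ising_sum[of p \<theta>1], where n=n1 and A="\<lambda>X. \<not> bad1 X"] P1 by simp
    have G2: "Pn (configs p) (ising p \<theta>2) n2 (\<lambda>X. \<not> (badD X \<or> bad2 X)) \<ge> 1 - 3 / real p"
    proof -
      have "Pn (configs p) (ising p \<theta>2) n2 (\<lambda>X. badD X \<or> bad2 X) \<le> 3 / real p"
        using Pn_or[OF w2, of n2 badD bad2] PD P2 by simp
      then show ?thesis
        using Pn_compl[OF configs_finite[of p] ising_sum[of p \<theta>2], where n=n2 and A="\<lambda>X. \<not> (badD X \<or> bad2 X)"] by simp
    qed
    have "prob_samples p \<theta>1 \<theta>2 n1 n2 E \<ge> Pn (configs p) (ising p \<theta>1) n1 (\<lambda>X. \<not> bad1 X) * Pn (configs p) (ising p \<theta>2) n2 (\<lambda>X. \<not> (badD X \<or> bad2 X))"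
    proof (rule prob_samples_ge)
      fix X1 X2 assume X1: "X1 \<in> samples p n1" and X2: "X2 \<in> samples p n2"
        and g1: "\<not> bad1 X1" and g2: "\<not> (badD X2 \<or> bad2 X2)"
      show "E X1 X2" unfolding E_def
      proof (intro supnorm_le[OF p] ballI)
        fix j assume j: "j \<in> idx p"
        define A where "A = (\<Sum>i<n1. suffT (X1 i) j)"
        define Bs where "Bs = (\<Sum>i<n2. r (X2 i) * suffT (X2 i) j)"
        define R where "R = (\<Sum>i<n2. r (X2 i))"
        have h1: "(\<Sum>i<n1. suffT (X1 i) j - \<mu> j) = A - real n1 * \<mu> j"
          by (simp add: A_def sum_subtractf)
        have h1': "(\<Sum>i<n1. - (suffT (X1 i) j - \<mu> j)) = - (A - real n1 * \<mu> j)"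
          by (simp add: A_def sum_subtractf sum_negf)
        have c1: "\<not> real n1 * s1 \<le> (\<Sum>i<n1. suffT (X1 i) j - \<mu> j)"
                 "\<not> real n1 * s1 \<le> (\<Sum>i<n1. - (suffT (X1 i) j - \<mu> j))"
          using g1 j unfolding bad1_def \<mu>_def[symmetric] by blast+
        have q1: "\<bar>- (1/real n1) * A + \<mu> j\<bar> \<le> s1"
          by (rule part1) (use c1 n1 in \<open>unfold h1 h1', auto\<close>)
        have hR: "(\<Sum>i<n2. 1 - r (X2 i)) = real n2 - R" by (simp add: R_def sum_subtractf)
        have Rg: "R > real n2 / 2" using g2 unfolding badD_def r_def[symmetric] hR by simp
        have h2: "(\<Sum>i<n2. r (X2 i) * (suffT (X2 i) j - \<mu> j)) = Bs - \<mu> j * R"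
          by (simp add: Bs_def R_def sum_subtractf right_diff_distrib sum_distrib_left mult.commute)
        have h2': "(\<Sum>i<n2. - (r (X2 i) * (suffT (X2 i) j - \<mu> j))) = - (Bs - \<mu> j * R)"
          using h2 by (simp add: sum_negf)
        have c2: "\<not> real n2 * s2 \<le> (\<Sum>i<n2. r (X2 i) * (suffT (X2 i) j - \<mu> j))"
                 "\<not> real n2 * s2 \<le> (\<Sum>i<n2. - (r (X2 i) * (suffT (X2 i) j - \<mu> j)))"
          using g2 j unfolding bad2_def \<mu>_def[symmetric] r_def[symmetric] by blast+
        have q2: "\<bar>Bs / R - \<mu> j\<bar> \<le> 2 * s2"
          by (rule part2) (use c2 n2 Rg s2nn in \<open>unfold h2 h2', auto\<close>)
        have "grad (lossL p n1 n2 X1 X2) (\<lambda>i. \<theta>1 i - \<theta>2 i) j = (- (1/real n1) * A + \<mu> j) + (Bs / R - \<mu> j)"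
          unfolding grad_ratio_form[OF j n2] A_def Bs_def R_def r_def by simp
        then have "\<bar>grad (lossL p n1 n2 X1 X2) (\<lambda>i. \<theta>1 i - \<theta>2 i) j\<bar> \<le> s1 + 2 * s2"
          using q1 q2 by linarith
        also have "\<dots> \<le> B" using s1le s2le unfolding B_def by simp
        finally show "\<bar>grad (lossL p n1 n2 X1 X2) (\<lambda>i. \<theta>1 i - \<theta>2 i) j\<bar> \<le> B" .
      qed
    qed
    moreover have "Pn (configs p) (ising p \<theta>1) n1 (\<lambda>X. \<not> bad1 X) * Pn (configs p) (ising p \<theta>2) n2 (\<lambda>X. \<not> (badD X \<or> bad2 X))
       \<ge> 1 - 2 / real p - 3 / real p"
      using G1 G2 Pn_nonneg[OF w1] Pn_nonneg[OF w2] p2 by (intro prod_lower) auto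
    ultimately show ?thesis by (simp add: diff_divide_distrib)
  qed
  then show ?thesis unfolding E_def Bdef .
qed

theorem corollary1:
  shows "\<exists>\<eta>2>0. \<exists>c>0. \<forall>(p::nat) (\<theta>1::param) (\<theta>2::param) (n1::nat) (n2::nat) (\<eta>0::real).
    p \<ge> 1 \<and> n1 \<ge> 1 \<and> n2 \<ge> 1 \<and>
    smooth_ratio p \<theta>1 \<theta>2 \<and>
    (\<forall>X1\<in>samples p n1. \<forall>X2\<in>samples p n2. \<forall>u::param.
        norm2 p u \<le> norm2 p (\<lambda>i. \<theta>1 i - \<theta>2 i) \<longrightarrow>
        lambda_max (idx p) (hess (lossL p n1 n2 X1 X2) (\<lambda>i. \<theta>1 i - \<theta>2 i + u i)) / 2 \<le> \<eta>0)
    \<longrightarrow>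
    prob_samples p \<theta>1 \<theta>2 n1 n2
      (\<lambda>X1 X2. supnorm p (grad (lossL p n1 n2 X1 X2) (\<lambda>i. \<theta>1 i - \<theta>2 i))
                 \<le> \<eta>2 * sqrt (ln (real p)) / sqrt (real (min n1 n2)))
    \<ge> 1 - c / real p"
    apply (rule exI[where x="180::real"], rule conjI, simp)
  apply (rule exI[where x="5::real"], rule conjI, simp)
  apply (intro allI impI)
  apply (elim conjE)
  apply (rule main)
     apply assumption+
  done

end
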